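(* Let $X$ be a finite $T_0$ topological space and let $f,g\in \mathrm{Homeo}(X)$. Then $f$ is isotopic to $g$ if and only if $f=g$. In particular, $\mathrm{Mod}(X)=\mathrm{Homeo}(X)$.
   Context: $\mathrm{Homeo}(X)$ is the group of homeomorphisms of $X$. Two homeomorphisms $f,g$ of $X$ are isotopic if there is a continuous map $H:X\times [0,1]\to X$ such that each $H_t=H(\cdot,t)$ is a homeomorphism of $X$, $H_0=f$ and $H_1=g$. The mapping class group $\mathrm{Mod}(X)$ is the group of isotopy classes of homeomorphisms of $X$. *)

theory Defs
  imports "HOL-Analysis.Analysis"
begin

definition isotopic :: "'a topology \<Rightarrow> ('a \<Rightarrow> 'a) \<Rightarrow> ('a \<Rightarrow> 'a) \<Rightarrow> bool" where
  "isotopic X f g \<longleftrightarrow>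
     (\<exists>H :: 'a \<times> real \<Rightarrow> 'a.
        continuous_map (prod_topology X (top_of_set {0..1})) X H \<and>
        (\<forall>t\<in>{0..1}. homeomorphic_map X X (\<lambda>x. H (x, t))) \<and>
        (\<forall>x\<in>topspace X. H (x, 0) = f x) \<and>
        (\<forall>x\<in>topspace X. H (x, 1) = g x))"

end

theory Submission
  imports Defs
begin

definition spec :: "'a topology \<Rightarrow> 'a \<Rightarrow> 'a \<Rightarrow> bool" where
  "spec X z y \<longleftrightarrow> (\<forall>U. openin X U \<and> y \<in> U \<longrightarrow> z \<in> U)"

definition minop :: "'a topology \<Rightarrow> 'a \<Rightarrow> 'a set" where
  "minop X y = \<Inter>{U. openin X U \<and> y \<in> U}"

lemma minop_open:
  assumes "finite (topspace X)" "y \<in> topspace X"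
  shows "openin X (minop X y)" "y \<in> minop X y" "\<And>z. z \<in> minop X y \<Longrightarrow> spec X z y"
proof -
  have fin: "finite {U. openin X U \<and> y \<in> U}"
    by (rule finite_subset[of _ "Pow (topspace X)"]) (use assms(1) openin_subset in auto)
  have ne: "{U. openin X U \<and> y \<in> U} \<noteq> {}" using assms(2) by auto
  show "openin X (minop X y)" unfolding minop_def
    by (rule openin_Inter[OF fin ne]) auto
  show "y \<in> minop X y" unfolding minop_def by auto
  fix z assume "z \<in> minop X y" then show "spec X z y" unfolding minop_def spec_def by auto
qed

lemma spec_homeo:
  assumes h: "homeomorphic_map X X a" and z: "z \<in> topspace X" and y: "y \<in> topspace X"
  shows "spec X (a z) (a y) \<longleftrightarrow> spec X z y"
proof
  assume s: "spec X (a z) (a y)"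
  show "spec X z y" unfolding spec_def
  proof (intro allI impI)
    fix U assume U: "openin X U \<and> y \<in> U"
    have "openin X (a ` U)" using homeomorphic_map_openness[OF h, of U] U openin_subset by blast
    then have "a z \<in> a ` U" using s U unfolding spec_def by auto
    then obtain w where "w \<in> U" "a w = a z" by auto
    moreover have "w \<in> topspace X" using \<open>w \<in> U\<close> U openin_subset by blast
    ultimately show "z \<in> U" using homeomorphic_imp_injective_map[OF h] z
      by (metis inj_onD)
  qed
next
  assume s: "spec X z y"
  show "spec X (a z) (a y)" unfolding spec_def
  proof (intro allI impI)
    fix V assume V: "openin X V \<and> a y \<in> V"
    have "openin X {x \<in> topspace X. a x \<in> V}"
      using openin_continuous_map_preimage[OF homeomorphic_imp_continuous_map[OF h]] V by blast
    then show "a z \<in> V" using s V y z unfolding spec_def by blast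
  qed
qed

lemma rigid:
  assumes fin: "finite (topspace X)" and t0: "t0_space X"
    and ha: "homeomorphic_map X X a" and hb: "homeomorphic_map X X b"
    and le: "\<forall>x\<in>topspace X. spec X (a x) (b x)"
  shows "\<forall>x\<in>topspace X. a x = b x"
proof
  fix x assume x: "x \<in> topspace X"
  define D where "D y = {z \<in> topspace X. spec X z y}" for y
  have cardD: "card (D (h x)) = card (D x)" if h: "homeomorphic_map X X h" for h
  proof -
    have "h ` D x = D (h x)"
    proof
      show "h ` D x \<subseteq> D (h x)"
        using spec_homeo[OF h _ x] homeomorphic_imp_surjective_map[OF h] unfolding D_def by auto
      show "D (h x) \<subseteq> h ` D x"
      proof
        fix w assume w: "w \<in> D (h x)"
        then obtain z where z: "z \<in> topspace X" "w = h z"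
          using homeomorphic_imp_surjective_map[OF h] unfolding D_def by blast
        then show "w \<in> h ` D x" using w spec_homeo[OF h z(1) x] unfolding D_def by auto
      qed
    qed
    moreover have "inj_on h (D x)"
      using homeomorphic_imp_injective_map[OF h] unfolding D_def by (auto intro: inj_on_subset)
    ultimately show ?thesis by (metis card_image)
  qed
  have ax: "a x \<in> topspace X" "b x \<in> topspace X"
    using homeomorphic_imp_surjective_map[OF ha] homeomorphic_imp_surjective_map[OF hb] x by auto
  have sub: "D (a x) \<subseteq> D (b x)"
    using le x unfolding D_def spec_def by blast
  have "D (a x) = D (b x)"
    by (rule card_subset_eq) (use fin sub cardD[OF ha] cardD[OF hb] in \<open>auto simp: D_def\<close>)
  moreover have "b x \<in> D (b x)" using ax unfolding D_def spec_def by auto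
  ultimately have s2: "spec X (b x) (a x)" unfolding D_def by auto
  have s1: "spec X (a x) (b x)" using le x by auto
  show "a x = b x"
  proof (rule ccontr)
    assume "a x \<noteq> b x"
    then obtain U where "openin X U" "a x \<notin> U \<longleftrightarrow> b x \<in> U"
      using t0 ax unfolding t0_space_def by blast
    then show False using s1 s2 unfolding spec_def by blast
  qed
qed

theorem theorem1p2:
  fixes X :: "'a topology" and f g :: "'a \<Rightarrow> 'a"
  assumes "finite (topspace X)" and "t0_space X"
    and "homeomorphic_map X X f" and "homeomorphic_map X X g"
  shows "isotopic X f g \<longleftrightarrow> (\<forall>x\<in>topspace X. f x = g x)"
proof
  assume "isotopic X f g"
  then obtain H :: "'a \<times> real \<Rightarrow> 'a" where
    Hc: "continuous_map (prod_topology X (top_of_set {0..1})) X H" and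
    Hh: "\<forall>t\<in>{0..1}. homeomorphic_map X X (\<lambda>x. H (x, t))" and
    H0: "\<forall>x\<in>topspace X. H (x, 0) = f x" and
    H1: "\<forall>x\<in>topspace X. H (x, 1) = g x"
    unfolding isotopic_def by blast
  define I where "I = {0..1::real}"
  have pc: "continuous_map (top_of_set I) X (\<lambda>t. H (x, t))" if x: "x \<in> topspace X" for x
  proof -
    have "continuous_map (top_of_set I) (prod_topology X (top_of_set {0..1})) (\<lambda>t. (x, t))"
      by (intro continuous_map_pairedI continuous_map_const[THEN iffD2] ) (auto simp: x I_def)
    then show ?thesis using continuous_map_compose[OF _ Hc] by (simp add: o_def)
  qed
  define F where "F t = restrict (\<lambda>x. H (x, t)) (topspace X)" for t
  have "F constant_on I"
  proof (rule locally_constant_imp_constant)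
    show "connected I" by (simp add: I_def)
  next
    fix a assume a: "a \<in> I"
    define T where "T x = {t \<in> I. H (x, t) \<in> minop X (H (x, a))}" for x
    have Hs: "H (x, t) \<in> topspace X" if "x \<in> topspace X" "t \<in> I" for x t
      using Hh that homeomorphic_imp_surjective_map unfolding I_def by blast
    have To: "openin (top_of_set I) (T x)" if x: "x \<in> topspace X" for x
    proof -
      have "openin X (minop X (H (x, a)))" using minop_open(1)[OF assms(1) Hs[OF x a]] .
      from openin_continuous_map_preimage[OF pc[OF x] this]
      show ?thesis unfolding T_def by simp
    qed
    define T0 where "T0 = \<Inter>(insert I (T ` topspace X))"
    have "openin (top_of_set I) T0" unfolding T0_def
      by (rule openin_Inter) (use assms(1) To in auto)
    moreover have "a \<in> T0" unfolding T0_def T_def using a minop_open(2)[OF assms(1) Hs[OF _ a]] by auto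
    moreover have "\<forall>t\<in>T0. F t = F a"
    proof
      fix t assume t: "t \<in> T0"
      then have tI: "t \<in> I" unfolding T0_def by auto
      have "\<forall>x\<in>topspace X. spec X (H (x, t)) (H (x, a))"
        using t minop_open(3)[OF assms(1) Hs[OF _ a]] unfolding T0_def T_def by auto
      then have "\<forall>x\<in>topspace X. H (x, t) = H (x, a)"
        using rigid[OF assms(1,2), of "\<lambda>x. H (x, t)" "\<lambda>x. H (x, a)"] Hh tI a
        unfolding I_def by auto
      then show "F t = F a" unfolding F_def by auto
    qed
    ultimately show "\<exists>T. openin (top_of_set I) T \<and> a \<in> T \<and> (\<forall>x\<in>T. F x = F a)" by blast
  qed
  then have "F 0 = F 1" unfolding constant_on_def I_def by auto
  then show "\<forall>x\<in>topspace X. f x = g x"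
    using H0 H1 unfolding F_def by (metis restrict_apply')
next
  assume eq: "\<forall>x\<in>topspace X. f x = g x"
  show "isotopic X f g" unfolding isotopic_def
  proof (intro exI conjI ballI)
    show "continuous_map (prod_topology X (top_of_set {0..1})) X (\<lambda>p. f (fst p))"
      using continuous_map_compose[OF continuous_map_fst homeomorphic_imp_continuous_map[OF assms(3)]]
      by (simp add: o_def)
  qed (use assms(3) eq in auto)
qed

end
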